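(* The poset $(\mathcal{D},\le)$ is a lattice.
   Context: A Dyck path of length $2m$ ($m\ge0$) is a lattice path from $(0,0)$ to $(2m,0)$ with steps $\nearrow=(1,1)$, $\searrow=(1,-1)$ never going below the $x$-axis; write $P(x)$ for its height at abscissa $x$. A cell is a point $(a,b)\in\mathbb{Z}^2$ with $b\ge0$, $a+b$ even (viewed as the tilted square with vertices $(a,b),(a+1,b\pm1),(a+2,b)$). The Dyck shape of $P$ (length $2m$) is $S(P)=\{(a,b): b\ge0,\ a+b\text{ even},\ 0\le a\le 2m-2,\ b+1\le P(a+1)\}$. Cells are adjacent if they differ by $(\pm1,\pm1)$. A ribbon is a nonempty set of cells, connected for adjacency, containing no four cells $(a,b),(a+1,b+1),(a+1,b-1),(a+2,b)$. For Dyck paths $D$ of length $2m$ and $E$ of length $2m+2$, $D\sqsubset E$ means $S(D)\subseteq S(E)$ and $S(E)\setminus S(D)$ is a ribbon. $(\mathcal{D},\le)$ is the set of all Dyck paths of all lengths (including the empty path) with $\le$ the reflexive and transitive closure of $\sqsubset$. *)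

theory Defs
  imports Main
begin

text \<open>A lattice path is a list of steps: True = up step (1,1), False = down step (1,-1).\<close>

definition step_val :: "bool \<Rightarrow> int" where
  "step_val s = (if s then 1 else -1)"

definition hgt :: "bool list \<Rightarrow> int \<Rightarrow> int" where
  "hgt P x = sum_list (map step_val (take (nat x) P))"

definition dyck :: "bool list \<Rightarrow> bool" where
  "dyck P \<longleftrightarrow> (\<forall>x. 0 \<le> x \<and> x \<le> int (length P) \<longrightarrow> 0 \<le> hgt P x)
              \<and> hgt P (int (length P)) = 0"

definition shape :: "bool list \<Rightarrow> (int \<times> int) set" where
  "shape P = {(a, b). 0 \<le> b \<and> even (a + b) \<and> 0 \<le> a \<and> a \<le> int (length P) - 2
                      \<and> b + 1 \<le> hgt P (a + 1)}"

definition adjacent :: "int \<times> int \<Rightarrow> int \<times> int \<Rightarrow> bool" where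
  "adjacent c d \<longleftrightarrow> \<bar>fst c - fst d\<bar> = 1 \<and> \<bar>snd c - snd d\<bar> = 1"

definition connected_cells :: "(int \<times> int) set \<Rightarrow> bool" where
  "connected_cells R \<longleftrightarrow>
     (\<forall>c\<in>R. \<forall>d\<in>R. (c, d) \<in> {(x, y). x \<in> R \<and> y \<in> R \<and> adjacent x y}\<^sup>*)"

definition ribbon :: "(int \<times> int) set \<Rightarrow> bool" where
  "ribbon R \<longleftrightarrow> R \<noteq> {} \<and> connected_cells R \<and>
     \<not> (\<exists>a b. (a, b) \<in> R \<and> (a + 1, b + 1) \<in> R \<and> (a + 1, b - 1) \<in> R \<and> (a + 2, b) \<in> R)"

definition dcover :: "bool list \<Rightarrow> bool list \<Rightarrow> bool" where
  "dcover D E \<longleftrightarrow> dyck D \<and> dyck E \<and> length E = length D + 2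
                  \<and> shape D \<subseteq> shape E \<and> ribbon (shape E - shape D)"

definition dle :: "bool list \<Rightarrow> bool list \<Rightarrow> bool" where
  "dle D E \<longleftrightarrow> dcover\<^sup>*\<^sup>* D E"

end

theory Submission
  imports Defs
begin

lemma hgt_neg: "x \<le> 0 \<Longrightarrow> hgt P x = 0"
  by (simp add: hgt_def)

lemma hgt_succ: "0 \<le> x \<Longrightarrow> x < int (length P) \<Longrightarrow> hgt P (x+1) = hgt P x + step_val (P ! nat x)"
proof -
  assume a: "0 \<le> x" "x < int (length P)"
  have "nat (x+1) = Suc (nat x)" using a by simp
  moreover have "nat x < length P" using a by simp
  ultimately show ?thesis by (simp add: hgt_def take_Suc_conv_app_nth)
qed

lemma hgt_beyond: "int (length P) \<le> x \<Longrightarrow> hgt P x = hgt P (int (length P))"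
  by (simp add: hgt_def)

lemma step_val_abs: "\<bar>step_val s\<bar> = 1" by (simp add: step_val_def)

lemma hgt_lip: "\<bar>hgt P (x+1) - hgt P x\<bar> \<le> 1"
proof (cases "x < 0")
  case True thus ?thesis by (simp add: hgt_neg)
next
  case False
  show ?thesis
  proof (cases "x < int (length P)")
    case True thus ?thesis using False hgt_succ[of x P] step_val_abs[of "P ! nat x"] by simp
  next
    case F2: False thus ?thesis using hgt_beyond[of P x] hgt_beyond[of P "x+1"] by simp
  qed
qed

lemma hgt_step1: "0 \<le> x \<Longrightarrow> x < int (length P) \<Longrightarrow> \<bar>hgt P (x+1) - hgt P x\<bar> = 1"
  using hgt_succ[of x P] step_val_abs[of "P ! nat x"] by simp

lemma hgt_par_nat: "k \<le> length P \<Longrightarrow> even (hgt P (int k) + int k)"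
proof (induction k)
  case 0 thus ?case by (simp add: hgt_neg)
next
  case (Suc k)
  have e: "hgt P (int (Suc k)) = hgt P (int k) + step_val (P ! k)"
    using hgt_succ[of "int k" P] Suc.prems by (simp add: ac_simps)
  have i: "even (hgt P (int k) + int k)" using Suc by simp
  have sv: "step_val (P ! k) = 1 \<or> step_val (P ! k) = -1" by (simp add: step_val_def)
  show ?case using e i sv by auto
qed

lemma hgt_par: "0 \<le> x \<Longrightarrow> x \<le> int (length P) \<Longrightarrow> even (hgt P x + x)"
  using hgt_par_nat[of "nat x" P] by simp

lemma dyck_nonneg: "dyck P \<Longrightarrow> 0 \<le> x \<Longrightarrow> x \<le> int (length P) \<Longrightarrow> 0 \<le> hgt P x"
  by (simp add: dyck_def)

lemma dyck_end: "dyck P \<Longrightarrow> hgt P (int (length P)) = 0"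
  by (simp add: dyck_def)

lemma dyck_even: "dyck P \<Longrightarrow> even (int (length P))"
  using hgt_par[of "int (length P)" P] dyck_end[of P] by simp


definition ups :: "bool list \<Rightarrow> nat set" where
  "ups P = {i. i < length P \<and> P ! i}"

lemma shape_mem: "(a,b) \<in> shape P \<longleftrightarrow> 0 \<le> b \<and> even (a+b) \<and> 0 \<le> a \<and> a \<le> int (length P) - 2 \<and> b+1 \<le> hgt P (a+1)"
  by (simp add: shape_def)

lemma sep:
  assumes "(c,d) \<in> {(x,y). x\<in>R \<and> y\<in>R \<and> adjacent x y}\<^sup>*" "\<forall>z\<in>R. fst z \<noteq> k" "fst c < k"
  shows "fst d < k"
  using assms(1,3)
proof (induction rule: rtrancl_induct)
  case base thus ?case by simp
next
  case (step y z)
  thus ?case using assms(2) by (auto simp: adjacent_def)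
qed

lemma hgt_lip2: "hgt P (y+1) \<le> hgt P y + 1 \<and> hgt P y \<le> hgt P (y+1) + 1"
  using hgt_lip[of P y] by arith

lemma cover_imp_sub:
  assumes dD: "dyck D" and dE: "dyck E" and len: "length E = length D + 2"
    and sub: "shape D \<subseteq> shape E" and rib: "ribbon (shape E - shape D)"
  shows "ups D \<subseteq> ups E"
proof -
  let ?R = "shape E - shape D"
  define n where "n = int (length D)"
  have lenE: "int (length E) = n+2" using len n_def by simp
  have mE: "\<And>a b. (a,b) \<in> shape E \<longleftrightarrow> 0 \<le> b \<and> even (a+b) \<and> 0 \<le> a \<and> a \<le> n \<and> b+1 \<le> hgt E (a+1)"
    by (simp add: shape_mem lenE)
  have mD: "\<And>a b. (a,b) \<in> shape D \<longleftrightarrow> 0 \<le> b \<and> even (a+b) \<and> 0 \<le> a \<and> a \<le> n-2 \<and> b+1 \<le> hgt D (a+1)"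
    by (simp add: shape_mem n_def)
  have nD: "\<And>x. 0\<le>x \<Longrightarrow> x\<le>n \<Longrightarrow> 0 \<le> hgt D x" using dyck_nonneg[OF dD] n_def by simp
  have nE: "\<And>x. 0\<le>x \<Longrightarrow> x\<le>n+2 \<Longrightarrow> 0 \<le> hgt E x" using dyck_nonneg[OF dE] lenE by simp
  have pD: "\<And>x. 0\<le>x \<Longrightarrow> x\<le>n \<Longrightarrow> even (hgt D x + x)" using hgt_par[of _ D] n_def by simp
  have pE: "\<And>x. 0\<le>x \<Longrightarrow> x\<le>n+2 \<Longrightarrow> even (hgt E x + x)" using hgt_par[of _ E] lenE by simp
  have LD: "\<And>y. hgt D (y+1) \<le> hgt D y + 1 \<and> hgt D y \<le> hgt D (y+1) + 1" by (rule hgt_lip2)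
  have LE: "\<And>y. hgt E (y+1) \<le> hgt E y + 1 \<and> hgt E y \<le> hgt E (y+1) + 1" by (rule hgt_lip2)
  have D0: "hgt D 0 = 0" and E0: "hgt E 0 = 0" by (simp_all add: hgt_neg)
  have Dn: "hgt D n = 0" using dyck_end[OF dD] n_def by simp
  have evn: "even n" using dyck_even[OF dD] n_def by simp
  have n0: "0 \<le> n" using n_def by simp
  have ge: "\<And>x. 0\<le>x \<Longrightarrow> x\<le>n \<Longrightarrow> hgt D x \<le> hgt E x"
  proof -
    fix x assume x: "0\<le>x" "x\<le>n"
    show "hgt D x \<le> hgt E x"
    proof (cases "hgt D x \<le> 0")
      case True thus ?thesis using nE[of x] x by simp
    next
      case False
      have x1: "1 \<le> x" using False x D0 by (cases "x=0") auto
      have x2: "x \<le> n-1" using False Dn x by (cases "x = n") auto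
      have "even ((x-1)+(hgt D x - 1))" using pD[OF x] by presburger
      hence "(x-1, hgt D x - 1) \<in> shape D" using False x1 x2 unfolding mD by simp
      hence "(x-1, hgt D x - 1) \<in> shape E" using sub by blast
      thus ?thesis unfolding mE by simp
    qed
  qed
  have le2: "\<And>x. 0\<le>x \<Longrightarrow> x\<le>n \<Longrightarrow> hgt E x \<le> hgt D x + 2"
  proof (rule ccontr)
    fix x assume x: "0\<le>x" "x\<le>n" and nle: "\<not> hgt E x \<le> hgt D x + 2"
    have "even (hgt D x + x)" "even (hgt E x + x)" using pD[OF x] pE[of x] x by auto
    hence big: "hgt D x + 4 \<le> hgt E x" using nle by presburger
    have "x \<noteq> 0" using big D0 E0 by auto
    moreover have "x \<noteq> 1" using big LE[of 0] E0 nD[of 1] x by auto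
    ultimately have x2: "2 \<le> x" using x by auto
    define h where "h = hgt D x"
    have h0: "0 \<le> h" using nD x h_def by simp
    have ph: "even (h + x)" using pD[OF x] h_def by simp
    have e1: "hgt E x \<le> hgt E (x-1) + 1" using LE[of "x-1"] by simp
    have d1: "hgt D x + 1 \<ge> hgt D (x-1)" using LD[of "x-1"] by simp
    have e2: "hgt E x \<le> hgt E (x+1) + 1" using LE[of "x"] by simp
    have d2: "hgt D (x+1) \<le> hgt D x + 1" using LD[of "x"] by simp
    have c1: "(x-2, h+2) \<in> ?R" unfolding Diff_iff mE mD
      using x x2 big h_def h0 ph e1 d1 by (simp; presburger)
    have c2: "(x-2+1, h+2+1) \<in> ?R" unfolding Diff_iff mE mD
      using x x2 big h_def h0 ph by (simp; presburger)
    have c3: "(x-2+1, h+2-1) \<in> ?R" unfolding Diff_iff mE mD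
      using x x2 big h_def h0 ph by (simp; presburger)
    have c4: "(x-2+2, h+2) \<in> ?R" unfolding Diff_iff mE mD
      using x x2 big h_def h0 ph e2 d2 by (simp; presburger)
    show False using rib c1 c2 c3 c4 unfolding ribbon_def by blast
  qed
  have sepk: "\<And>k. 1 \<le> k \<Longrightarrow> k+1 \<le> n \<Longrightarrow> hgt E k = hgt D k + 2 \<Longrightarrow> hgt E (k+1) = hgt D (k+1) \<Longrightarrow> False"
  proof -
    fix k assume k: "1 \<le> k" "k+1 \<le> n" "hgt E k = hgt D k + 2" "hgt E (k+1) = hgt D (k+1)"
    have pk: "even (hgt D k + k)" using pD[of k] k by simp
    have hk: "0 \<le> hgt D k" using nD[of k] k by simp
    have c: "(k-1, hgt D k + 1) \<in> ?R" unfolding Diff_iff mE mD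
      using k pk hk by (simp; presburger)
    have pn: "even (hgt E (n+1) + (n+1))" using pE[of "n+1"] n0 by simp
    have nn: "0 \<le> hgt E (n+1)" using nE[of "n+1"] n0 by simp
    have d: "(n, 0) \<in> ?R" unfolding Diff_iff mE mD
      using evn pn nn n0 by (simp; presburger)
    have nok: "\<forall>z\<in>?R. fst z \<noteq> k"
    proof
      fix z assume z: "z \<in> ?R"
      obtain a b where ab: "z = (a,b)" by (cases z)
      show "fst z \<noteq> k"
      proof
        assume "fst z = k"
        hence a: "a = k" using ab by simp
        have zE: "0 \<le> b \<and> even (a+b) \<and> 0 \<le> a \<and> a \<le> n \<and> b+1 \<le> hgt E (a+1)"
          using z ab mE by auto
        have zD: "\<not> (0 \<le> b \<and> even (a+b) \<and> 0 \<le> a \<and> a \<le> n-2 \<and> b+1 \<le> hgt D (a+1))"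
          using z ab mD by auto
        show False
        proof (cases "k \<le> n-2")
          case True thus False using zE zD a k by simp
        next
          case False
          hence "k+1 = n" using k by simp
          thus False using zE a k Dn by simp
        qed
      qed
    qed
    have "(( k-1, hgt D k + 1), (n,0)) \<in> {(x,y). x\<in>?R \<and> y\<in>?R \<and> adjacent x y}\<^sup>*"
      using rib c d unfolding ribbon_def connected_cells_def by blast
    from sep[OF this nok] show False using k by simp
  qed
  have mono: "\<And>x. 0\<le>x \<Longrightarrow> x < n \<Longrightarrow> hgt E x - hgt D x \<le> hgt E (x+1) - hgt D (x+1)"
  proof -
    fix x assume x: "0\<le>x" "x<n"
    show "hgt E x - hgt D x \<le> hgt E (x+1) - hgt D (x+1)"
    proof (cases "x = 0")
      case True thus ?thesis using ge[of 1] D0 E0 x by simp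
    next
      case False
      have a: "hgt E x - hgt D x = 0 \<or> hgt E x - hgt D x = 2"
        using ge[of x] le2[of x] pD[of x] pE[of x] x by presburger
      have b: "hgt E (x+1) - hgt D (x+1) = 0 \<or> hgt E (x+1) - hgt D (x+1) = 2"
        using ge[of "x+1"] le2[of "x+1"] pD[of "x+1"] pE[of "x+1"] x by presburger
      show ?thesis using a b sepk[of x] x False by auto
    qed
  qed
  show ?thesis
  proof
    fix i assume "i \<in> ups D"
    hence i: "i < length D" "D ! i" by (auto simp: ups_def)
    have il: "int i < n" using i n_def by simp
    show "i \<in> ups E"
    proof (rule ccontr)
      assume "i \<notin> ups E"
      hence "\<not> E ! i" using i len by (auto simp: ups_def)
      hence "hgt E (int i + 1) = hgt E (int i) - 1" using hgt_succ[of "int i" E] i len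
        by (simp add: step_val_def)
      moreover have "hgt D (int i + 1) = hgt D (int i) + 1" using hgt_succ[of "int i" D] i
        by (simp add: step_val_def)
      ultimately show False using mono[of "int i"] il by simp
    qed
  qed
qed


lemma sub_imp_cover:
  assumes dD: "dyck D" and dE: "dyck E" and len: "length E = length D + 2"
    and su: "ups D \<subseteq> ups E"
  shows "shape D \<subseteq> shape E \<and> ribbon (shape E - shape D)"
proof -
  let ?R = "shape E - shape D"
  let ?rel = "{(x,y). x\<in>?R \<and> y\<in>?R \<and> adjacent x y}"
  define n where "n = int (length D)"
  have lenE: "int (length E) = n+2" using len n_def by simp
  have mE: "\<And>a b. (a,b) \<in> shape E \<longleftrightarrow> 0 \<le> b \<and> even (a+b) \<and> 0 \<le> a \<and> a \<le> n \<and> b+1 \<le> hgt E (a+1)"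
    by (simp add: shape_mem lenE)
  have mD: "\<And>a b. (a,b) \<in> shape D \<longleftrightarrow> 0 \<le> b \<and> even (a+b) \<and> 0 \<le> a \<and> a \<le> n-2 \<and> b+1 \<le> hgt D (a+1)"
    by (simp add: shape_mem n_def)
  have nD: "\<And>x. 0\<le>x \<Longrightarrow> x\<le>n \<Longrightarrow> 0 \<le> hgt D x" using dyck_nonneg[OF dD] n_def by simp
  have nE: "\<And>x. 0\<le>x \<Longrightarrow> x\<le>n+2 \<Longrightarrow> 0 \<le> hgt E x" using dyck_nonneg[OF dE] lenE by simp
  have pD: "\<And>x. 0\<le>x \<Longrightarrow> x\<le>n \<Longrightarrow> even (hgt D x + x)" using hgt_par[of _ D] n_def by simp
  have pE: "\<And>x. 0\<le>x \<Longrightarrow> x\<le>n+2 \<Longrightarrow> even (hgt E x + x)" using hgt_par[of _ E] lenE by simp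
  have LD: "\<And>y. hgt D (y+1) \<le> hgt D y + 1 \<and> hgt D y \<le> hgt D (y+1) + 1" by (rule hgt_lip2)
  have LE: "\<And>y. hgt E (y+1) \<le> hgt E y + 1 \<and> hgt E y \<le> hgt E (y+1) + 1" by (rule hgt_lip2)
  have D0: "hgt D 0 = 0" and E0: "hgt E 0 = 0" by (simp_all add: hgt_neg)
  have Dn: "hgt D n = 0" using dyck_end[OF dD] n_def by simp
  have En2: "hgt E (n+2) = 0" using dyck_end[OF dE] lenE by simp
  have evn: "even n" using dyck_even[OF dD] n_def by simp
  have n0: "0 \<le> n" using n_def by simp
  have step: "\<And>x. 0\<le>x \<Longrightarrow> x < n \<Longrightarrow> hgt E x - hgt D x \<le> hgt E (x+1) - hgt D (x+1)"
  proof -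
    fix x assume x: "0\<le>x" "x<n"
    have eD: "hgt D (x+1) = hgt D x + step_val (D ! nat x)" using hgt_succ[of x D] x n_def by simp
    have eE: "hgt E (x+1) = hgt E x + step_val (E ! nat x)" using hgt_succ[of x E] x lenE by simp
    have "D ! nat x \<Longrightarrow> E ! nat x"
    proof -
      assume "D ! nat x"
      hence "nat x \<in> ups D" using x n_def by (simp add: ups_def)
      thus "E ! nat x" using su by (auto simp: ups_def)
    qed
    thus "hgt E x - hgt D x \<le> hgt E (x+1) - hgt D (x+1)" using eD eE
      by (cases "D ! nat x"; cases "E ! nat x") (auto simp: step_val_def)
  qed
  have mono_k: "\<And>k::nat. \<And>x. 0\<le>x \<Longrightarrow> x + int k \<le> n \<Longrightarrow> hgt E x - hgt D x \<le> hgt E (x + int k) - hgt D (x + int k)"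
  proof -
    fix k :: nat
    show "\<And>x. 0\<le>x \<Longrightarrow> x + int k \<le> n \<Longrightarrow> hgt E x - hgt D x \<le> hgt E (x + int k) - hgt D (x + int k)"
    proof (induction k)
      case 0 thus ?case by simp
    next
      case (Suc k)
      have "hgt E x - hgt D x \<le> hgt E (x + int k) - hgt D (x + int k)" using Suc by simp
      also have "\<dots> \<le> hgt E (x + int k + 1) - hgt D (x + int k + 1)" using step[of "x + int k"] Suc.prems by simp
      finally show ?case by (simp add: ac_simps)
    qed
  qed
  have mono: "\<And>x y. 0\<le>x \<Longrightarrow> x \<le> y \<Longrightarrow> y \<le> n \<Longrightarrow> hgt E x - hgt D x \<le> hgt E y - hgt D y"
    using mono_k[of _ "nat (_ - _)"] by (metis add.commute diff_add_cancel diff_ge_0_iff_ge int_nat_eq)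
  have En: "hgt E n \<le> 2" using LE[of n] LE[of "n+1"] En2 by (simp add: ac_simps)
  have g01: "\<And>x. 0\<le>x \<Longrightarrow> x \<le> n \<Longrightarrow> hgt E x = hgt D x \<or> hgt E x = hgt D x + 2"
  proof -
    fix x assume x: "0\<le>x" "x \<le> n"
    have "0 \<le> hgt E x - hgt D x" using mono[of 0 x] x D0 E0 by simp
    moreover have "hgt E x - hgt D x \<le> 2" using mono[of x n] x Dn En by simp
    moreover have "even (hgt D x + x)" "even (hgt E x + x)" using pD pE x by auto
    ultimately show "hgt E x = hgt D x \<or> hgt E x = hgt D x + 2" by presburger
  qed
  have sub: "shape D \<subseteq> shape E"
  proof
    fix z assume z: "z \<in> shape D"
    obtain a b where ab: "z = (a,b)" by (cases z)
    have "0 \<le> b \<and> even (a+b) \<and> 0 \<le> a \<and> a \<le> n-2 \<and> b+1 \<le> hgt D (a+1)" using z ab mD by auto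
    moreover have "0 \<le> a \<Longrightarrow> a \<le> n-2 \<Longrightarrow> hgt D (a+1) \<le> hgt E (a+1)" using g01[of "a+1"] by auto
    ultimately show "z \<in> shape E" using ab mE by auto
  qed
  have En1: "hgt E (n+1) \<le> 1" using LE[of "n+1"] En2 by (simp add: ac_simps)
  have Rchar: "\<And>a b. (a,b) \<in> ?R \<Longrightarrow> (0 \<le> a \<and> a \<le> n-1 \<and> b = hgt D (a+1) + 1 \<and> hgt E (a+1) = hgt D (a+1) + 2) \<or> (a = n \<and> b = 0)"
  proof -
    fix a b assume ab: "(a,b) \<in> ?R"
    have zE: "0 \<le> b \<and> even (a+b) \<and> 0 \<le> a \<and> a \<le> n \<and> b+1 \<le> hgt E (a+1)" using ab mE by auto
    have zD: "\<not> (0 \<le> b \<and> even (a+b) \<and> 0 \<le> a \<and> a \<le> n-2 \<and> b+1 \<le> hgt D (a+1))" using ab mD by auto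
    show "?thesis a b"
    proof (cases "a = n")
      case True thus ?thesis using zE En1 by simp
    next
      case False
      hence a1: "a+1 \<le> n" using zE evn by presburger
      have lo: "hgt D (a+1) \<le> b"
      proof (cases "a \<le> n-2")
        case True thus ?thesis using zE zD by simp
      next
        case False thus ?thesis using a1 Dn zE by (cases "a+1 = n") auto
      qed
      have p: "even (hgt D (a+1) + (a+1))" using pD[of "a+1"] a1 zE by simp
      show ?thesis using g01[of "a+1"] a1 zE lo p by presburger
    qed
  qed
  have Rmem: "\<And>a. 0 \<le> a \<Longrightarrow> a \<le> n-1 \<Longrightarrow> hgt E (a+1) = hgt D (a+1) + 2 \<Longrightarrow> (a, hgt D (a+1) + 1) \<in> ?R"
  proof -
    fix a assume a: "0 \<le> a" "a \<le> n-1" "hgt E (a+1) = hgt D (a+1) + 2"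
    have p: "even (hgt D (a+1) + (a+1))" using pD[of "a+1"] a by simp
    have h: "0 \<le> hgt D (a+1)" using nD[of "a+1"] a by simp
    show "(a, hgt D (a+1) + 1) \<in> ?R" unfolding Diff_iff mE mD using a p h by (simp; presburger)
  qed
  have pn: "even (hgt E (n+1) + (n+1))" using pE[of "n+1"] n0 by simp
  have nn: "0 \<le> hgt E (n+1)" using nE[of "n+1"] n0 by simp
  have dmem: "(n, 0) \<in> ?R" unfolding Diff_iff mE mD
    using evn pn nn n0 by (simp; presburger)
  have nodia: "\<not> (\<exists>a b. (a, b) \<in> ?R \<and> (a + 1, b + 1) \<in> ?R \<and> (a + 1, b - 1) \<in> ?R \<and> (a + 2, b) \<in> ?R)"
  proof
    assume "\<exists>a b. (a, b) \<in> ?R \<and> (a + 1, b + 1) \<in> ?R \<and> (a + 1, b - 1) \<in> ?R \<and> (a + 2, b) \<in> ?R"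
    then obtain a b where c: "(a + 1, b + 1) \<in> ?R" "(a + 1, b - 1) \<in> ?R" "(a + 2, b) \<in> ?R" by blast
    show False using Rchar[OF c(1)] Rchar[OF c(2)] Rchar[OF c(3)] by auto
  qed
  have reach: "\<And>j::nat. \<And>a. 0 \<le> a \<Longrightarrow> a = n-1-int j \<Longrightarrow> hgt E (a+1) = hgt D (a+1) + 2 \<Longrightarrow> ((a, hgt D (a+1) + 1), (n,0)) \<in> ?rel\<^sup>*"
  proof -
    fix j :: nat
    show "\<And>a. 0 \<le> a \<Longrightarrow> a = n-1-int j \<Longrightarrow> hgt E (a+1) = hgt D (a+1) + 2 \<Longrightarrow> ((a, hgt D (a+1) + 1), (n,0)) \<in> ?rel\<^sup>*"
    proof (induction j)
      case (0 a)
      have c: "(a, hgt D (a+1) + 1) \<in> ?R" using Rmem[of a] 0 by simp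
      have "adjacent (a, hgt D (a+1) + 1) (n,0)" using 0 Dn by (simp add: adjacent_def)
      thus ?case using c dmem by (intro r_into_rtrancl) simp
    next
      case (Suc j a)
      have a1: "0 \<le> a+1" "a+1 = n-1-int j" using Suc.prems by auto
      have g2: "hgt E (a+1+1) = hgt D (a+1+1) + 2" using mono[of "a+1" "a+1+1"] g01[of "a+1+1"] Suc.prems by auto
      have ih: "((a+1, hgt D (a+1+1) + 1), (n,0)) \<in> ?rel\<^sup>*" using Suc.IH[OF a1 g2] .
      have c: "(a, hgt D (a+1) + 1) \<in> ?R" using Rmem[of a] Suc.prems by simp
      have c2: "(a+1, hgt D (a+1+1) + 1) \<in> ?R" by (rule Rmem) (use a1 g2 in auto)
      have "\<bar>hgt D (a+1+1) - hgt D (a+1)\<bar> = 1" by (rule hgt_step1) (use a1 n_def in auto)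
      hence "adjacent (a, hgt D (a+1) + 1) (a+1, hgt D (a+1+1) + 1)" by (simp add: adjacent_def)
      hence "((a, hgt D (a+1) + 1), (a+1, hgt D (a+1+1) + 1)) \<in> ?rel" using c c2 by simp
      thus ?case using ih by (rule converse_rtrancl_into_rtrancl)
    qed
  qed
  have toP: "\<And>c. c \<in> ?R \<Longrightarrow> (c, (n,0)) \<in> ?rel\<^sup>*"
  proof -
    fix c assume c: "c \<in> ?R"
    obtain a b where ab: "c = (a,b)" by (cases c)
    show "(c, (n,0)) \<in> ?rel\<^sup>*"
    proof (cases "a = n \<and> b = 0")
      case True thus ?thesis using ab by simp
    next
      case False
      hence h: "0 \<le> a \<and> a \<le> n-1 \<and> b = hgt D (a+1) + 1 \<and> hgt E (a+1) = hgt D (a+1) + 2"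
        using Rchar[of a b] c ab by auto
      thus ?thesis using reach[of a "nat (n-1-a)"] ab by simp
    qed
  qed
  have symr: "?rel\<inverse> = ?rel" by (auto simp: adjacent_def)
  have conn: "connected_cells ?R" unfolding connected_cells_def
  proof (intro ballI)
    fix c d assume c: "c \<in> ?R" and d: "d \<in> ?R"
    have "((n,0), d) \<in> (?rel\<inverse>)\<^sup>*" using toP[OF d] by (rule rtrancl_converseI)
    hence "((n,0), d) \<in> ?rel\<^sup>*" using symr by simp
    thus "(c, d) \<in> ?rel\<^sup>*" using toP[OF c] by (rule rtrancl_trans[rotated])
  qed
  show ?thesis using sub conn nodia dmem unfolding ribbon_def by blast
qed


lemma cover_iff:
  assumes "dyck D" "dyck E"
  shows "dcover D E \<longleftrightarrow> length E = length D + 2 \<and> ups D \<subseteq> ups E"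
  using assms cover_imp_sub sub_imp_cover unfolding dcover_def by blast

lemma ups_Int_Suc: "k < length P \<Longrightarrow> ups P \<inter> {..<Suc k} = (if P ! k then insert k (ups P \<inter> {..<k}) else ups P \<inter> {..<k})"
  by (auto simp: ups_def less_Suc_eq)

lemma hgt_count: "k \<le> length P \<Longrightarrow> hgt P (int k) = 2 * int (card (ups P \<inter> {..<k})) - int k"
proof (induction k)
  case 0 thus ?case by (simp add: hgt_neg)
next
  case (Suc k)
  have e: "hgt P (int (Suc k)) = hgt P (int k) + step_val (P ! k)"
    using hgt_succ[of "int k" P] Suc.prems by (simp add: ac_simps)
  have f: "finite (ups P \<inter> {..<k})" by simp
  have nk: "k \<notin> ups P \<inter> {..<k}" by simp
  show ?case using e Suc ups_Int_Suc[of k P] f nk by (auto simp: step_val_def)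
qed

lemma ups_sub: "ups P \<subseteq> {..<length P}" by (auto simp: ups_def)

lemma finite_ups[simp]: "finite (ups P)" using ups_sub finite_subset by blast

lemma dyck_card: "dyck P \<Longrightarrow> 2 * card (ups P) = length P"
proof -
  assume d: "dyck P"
  have "ups P \<inter> {..<length P} = ups P" using ups_sub by blast
  thus ?thesis using hgt_count[of "length P" P] dyck_end[OF d] by simp
qed

definition good :: "nat set \<Rightarrow> bool" where
  "good A \<longleftrightarrow> finite A \<and> (\<forall>x. x \<le> 2 * card A \<longrightarrow> x \<le> 2 * card (A \<inter> {..<x}))"

definition mk :: "nat set \<Rightarrow> bool list" where
  "mk A = map (\<lambda>i. i \<in> A) [0..<2 * card A]"

lemma good_bound: "good A \<Longrightarrow> A \<subseteq> {..<2 * card A}"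
proof -
  assume g: "good A"
  hence f: "finite A" and c: "2 * card A \<le> 2 * card (A \<inter> {..<2 * card A})" by (auto simp: good_def)
  have "A \<inter> {..<2 * card A} = A"
    by (rule card_seteq) (use f c in auto)
  thus ?thesis by blast
qed

lemma dyck_good: "dyck P \<Longrightarrow> good (ups P) \<and> mk (ups P) = P"
proof -
  assume d: "dyck P"
  have c: "2 * card (ups P) = length P" using dyck_card[OF d] .
  have g: "good (ups P)" unfolding good_def
  proof (intro conjI allI impI)
    fix x assume x: "x \<le> 2 * card (ups P)"
    have "0 \<le> hgt P (int x)" using dyck_nonneg[OF d, of "int x"] x c by simp
    thus "x \<le> 2 * card (ups P \<inter> {..<x})" using hgt_count[of x P] x c by simp
  qed simp
  have "mk (ups P) = P"
  proof (rule nth_equalityI)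
    show "length (mk (ups P)) = length P" using c by (simp add: mk_def)
    fix i assume "i < length (mk (ups P))"
    hence i: "i < length P" using c by (simp add: mk_def)
    hence "mk (ups P) ! i = (i \<in> ups P)" using c by (simp add: mk_def)
    thus "mk (ups P) ! i = P ! i" using i by (simp add: ups_def)
  qed
  thus ?thesis using g by simp
qed

lemma good_dyck: "good A \<Longrightarrow> dyck (mk A) \<and> ups (mk A) = A"
proof -
  assume g: "good A"
  have b: "A \<subseteq> {..<2 * card A}" using good_bound[OF g] .
  have u: "ups (mk A) = A" using b by (auto simp: ups_def mk_def)
  have l: "length (mk A) = 2 * card A" by (simp add: mk_def)
  have f: "finite A" using g by (simp add: good_def)
  have "dyck (mk A)" unfolding dyck_def
  proof (intro conjI allI impI)
    fix x :: int assume x: "0 \<le> x \<and> x \<le> int (length (mk A))"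
    have "nat x \<le> 2 * card A" using x l by (simp add: nat_le_iff)
    hence "nat x \<le> 2 * card (A \<inter> {..<nat x})" using g by (simp add: good_def)
    hence i1: "int (nat x) \<le> int (2 * card (A \<inter> {..<nat x}))" by (rule of_nat_mono)
    have nl: "nat x \<le> length (mk A)" using x by (simp add: nat_le_iff)
    have hc: "hgt (mk A) x = 2 * int (card (A \<inter> {..<nat x})) - x" using hgt_count[OF nl] x u by simp
    show "0 \<le> hgt (mk A) x" using hc i1 x by simp
  next
    have "A \<inter> {..<2 * card A} = A" using b by blast
    thus "hgt (mk A) (int (length (mk A))) = 0" using hgt_count[of "length (mk A)" "mk A"] u l by simp
  qed
  thus ?thesis using u by simp
qed

lemma good_empty: "good {}" by (simp add: good_def)

lemma good_union: "good A \<Longrightarrow> good B \<Longrightarrow> good (A \<union> B)"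
proof -
  assume gA: "good A" and gB: "good B"
  have fA: "finite A" and fB: "finite B" using gA gB by (auto simp: good_def)
  show ?thesis unfolding good_def
  proof (intro conjI allI impI)
    show "finite (A \<union> B)" using fA fB by simp
  next
    fix x assume x: "x \<le> 2 * card (A \<union> B)"
    show "x \<le> 2 * card ((A \<union> B) \<inter> {..<x})"
    proof (cases "x \<le> 2 * card A")
      case True
      hence "x \<le> 2 * card (A \<inter> {..<x})" using gA by (simp add: good_def)
      moreover have "card (A \<inter> {..<x}) \<le> card ((A \<union> B) \<inter> {..<x})" by (rule card_mono) (use fA fB in auto)
      ultimately show ?thesis by simp
    next
      case F1: False
      show ?thesis
      proof (cases "x \<le> 2 * card B")
        case True
        hence "x \<le> 2 * card (B \<inter> {..<x})" using gB by (simp add: good_def)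
        moreover have "card (B \<inter> {..<x}) \<le> card ((A \<union> B) \<inter> {..<x})" by (rule card_mono) (use fA fB in auto)
        ultimately show ?thesis by simp
      next
        case False
        have "A \<subseteq> {..<x}" using good_bound[OF gA] F1 by auto
        moreover have "B \<subseteq> {..<x}" using good_bound[OF gB] False by auto
        ultimately have "(A \<union> B) \<inter> {..<x} = A \<union> B" by blast
        thus ?thesis using x by simp
      qed
    qed
  qed
qed

lemma good_Union: "finite F \<Longrightarrow> (\<forall>C\<in>F. good C) \<Longrightarrow> good (\<Union>F)"
  by (induction F rule: finite_induct) (auto intro: good_union good_empty)

lemma good_insert:
  assumes gA: "good A" and gB: "good B" and sub: "A \<subseteq> B" and s: "s \<in> B - A"
    and mn: "\<forall>y\<in>B-A. s \<le> y"
  shows "good (insert s A)"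
proof -
  have fA: "finite A" and fB: "finite B" using gA gB by (auto simp: good_def)
  have cI: "card (insert s A) = card A + 1" using fA s by simp
  have cB: "card (insert s A) \<le> card B" by (rule card_mono) (use fB sub s in auto)
  show ?thesis unfolding good_def
  proof (intro conjI allI impI)
    show "finite (insert s A)" using fA by simp
  next
    fix x assume x: "x \<le> 2 * card (insert s A)"
    show "x \<le> 2 * card (insert s A \<inter> {..<x})"
    proof (cases "x \<le> s")
      case True
      have "insert s A \<inter> {..<x} = B \<inter> {..<x}"
      proof
        show "insert s A \<inter> {..<x} \<subseteq> B \<inter> {..<x}" using sub True by auto
        show "B \<inter> {..<x} \<subseteq> insert s A \<inter> {..<x}"
        proof
          fix y assume y: "y \<in> B \<inter> {..<x}"
          have "y \<in> A"
          proof (rule ccontr)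
            assume "y \<notin> A"
            hence "s \<le> y" using mn y by blast
            thus False using y True by simp
          qed
          thus "y \<in> insert s A \<inter> {..<x}" using y by simp
        qed
      qed
      moreover have "x \<le> 2 * card (B \<inter> {..<x})" using gB x cB by (simp add: good_def)
      ultimately show ?thesis by simp
    next
      case False
      have e: "insert s A \<inter> {..<x} = insert s (A \<inter> {..<x})" using False by auto
      have c: "card (insert s A \<inter> {..<x}) = card (A \<inter> {..<x}) + 1" unfolding e using fA s by simp
      show ?thesis
      proof (cases "x \<le> 2 * card A")
        case True
        hence "x \<le> 2 * card (A \<inter> {..<x})" using gA by (simp add: good_def)
        thus ?thesis using c by simp
      next
        case F2: False
        have "A \<inter> {..<x} = A" using good_bound[OF gA] F2 by auto
        thus ?thesis using c x cI by simp
      qed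
    qed
  qed
qed

lemma good_chain: "good A \<Longrightarrow> good B \<Longrightarrow> A \<subseteq> B \<Longrightarrow> dcover\<^sup>*\<^sup>* (mk A) (mk B)"
proof (induction "card (B - A)" arbitrary: A rule: less_induct)
  case less
  show ?case
  proof (cases "B - A = {}")
    case True
    hence "A = B" using less.prems by blast
    thus ?thesis by simp
  next
    case False
    have fB: "finite B" using less.prems by (simp add: good_def)
    define s where "s = Min (B - A)"
    have s: "s \<in> B - A" unfolding s_def by (rule Min_in) (use fB False in auto)
    have mn: "\<forall>y\<in>B-A. s \<le> y" unfolding s_def using fB by auto
    define A' where "A' = insert s A"
    have gA': "good A'" unfolding A'_def by (rule good_insert) (use less.prems s mn in auto)
    have sub': "A' \<subseteq> B" using less.prems s A'_def by auto
    have lt: "card (B - A') < card (B - A)" unfolding A'_def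
      by (rule psubset_card_mono) (use fB s in auto)
    have ih: "dcover\<^sup>*\<^sup>* (mk A') (mk B)" using less.hyps[OF lt gA' less.prems(2) sub'] .
    have dA: "dyck (mk A) \<and> ups (mk A) = A" using good_dyck less.prems by blast
    have dA': "dyck (mk A') \<and> ups (mk A') = A'" using good_dyck gA' by blast
    have fA: "finite A" using less.prems by (simp add: good_def)
    have len: "length (mk A') = length (mk A) + 2" using fA s by (simp add: mk_def A'_def)
    have "dcover (mk A) (mk A')" using cover_iff[of "mk A" "mk A'"] dA dA' len A'_def by auto
    thus ?thesis using ih by (rule converse_rtranclp_into_rtranclp)
  qed
qed

lemma dle_iff: "dyck D \<Longrightarrow> dyck E \<Longrightarrow> dle D E \<longleftrightarrow> ups D \<subseteq> ups E"
proof
  assume "dle D E"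
  hence "dcover\<^sup>*\<^sup>* D E" by (simp add: dle_def)
  thus "ups D \<subseteq> ups E"
  proof (induction rule: rtranclp_induct)
    case base thus ?case by simp
  next
    case (step y z)
    thus ?case using cover_imp_sub unfolding dcover_def by blast
  qed
next
  assume d: "dyck D" "dyck E" and s: "ups D \<subseteq> ups E"
  have "dcover\<^sup>*\<^sup>* (mk (ups D)) (mk (ups E))"
    using good_chain dyck_good d s by blast
  thus "dle D E" using dyck_good d by (simp add: dle_def)
qed

theorem mainTheorem5:
  shows "(\<forall>D E. dyck D \<and> dyck E \<and> dle D E \<and> dle E D \<longrightarrow> D = E)
    \<and> (\<forall>D E. dyck D \<and> dyck E \<longrightarrow>
         (\<exists>J. dyck J \<and> dle D J \<and> dle E J \<and>
              (\<forall>U. dyck U \<and> dle D U \<and> dle E U \<longrightarrow> dle J U)))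
    \<and> (\<forall>D E. dyck D \<and> dyck E \<longrightarrow>
         (\<exists>M. dyck M \<and> dle M D \<and> dle M E \<and>
              (\<forall>L. dyck L \<and> dle L D \<and> dle L E \<longrightarrow> dle L M)))"
proof (intro conjI allI impI)
  fix D E assume a: "dyck D \<and> dyck E \<and> dle D E \<and> dle E D"
  hence "ups D = ups E" using dle_iff by blast
  thus "D = E" using dyck_good a by metis
next
  fix D E assume a: "dyck D \<and> dyck E"
  define J where "J = mk (ups D \<union> ups E)"
  have g: "good (ups D \<union> ups E)" using good_union dyck_good a by blast
  have dJ: "dyck J" and uJ: "ups J = ups D \<union> ups E" using good_dyck[OF g] J_def by auto
  show "\<exists>J. dyck J \<and> dle D J \<and> dle E J \<and> (\<forall>U. dyck U \<and> dle D U \<and> dle E U \<longrightarrow> dle J U)"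
    using dJ uJ a dle_iff by (intro exI[of _ J]) auto
next
  fix D E assume a: "dyck D \<and> dyck E"
  define F where "F = {C. C \<subseteq> ups D \<inter> ups E \<and> good C}"
  have fF: "finite F" unfolding F_def
    by (rule finite_subset[of _ "Pow (ups D \<inter> ups E)"]) auto
  have g: "good (\<Union>F)" using good_Union[OF fF] F_def by auto
  have sF: "\<Union>F \<subseteq> ups D \<inter> ups E" using F_def by auto
  define M where "M = mk (\<Union>F)"
  have dM: "dyck M" and uM: "ups M = \<Union>F" using good_dyck[OF g] M_def by auto
  have mx: "\<And>L. dyck L \<and> dle L D \<and> dle L E \<Longrightarrow> dle L M"
  proof -
    fix L assume l: "dyck L \<and> dle L D \<and> dle L E"
    have "ups L \<subseteq> ups D \<inter> ups E" using l a dle_iff by blast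
    moreover have "good (ups L)" using dyck_good l by blast
    ultimately have "ups L \<in> F" using F_def by simp
    hence "ups L \<subseteq> ups M" using uM by blast
    thus "dle L M" using dle_iff l dM by blast
  qed
  show "\<exists>M. dyck M \<and> dle M D \<and> dle M E \<and> (\<forall>L. dyck L \<and> dle L D \<and> dle L E \<longrightarrow> dle L M)"
    using dM uM sF a dle_iff mx by (intro exI[of _ M]) auto
qed

end
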